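(* For all integers $m,n\ge1$, $$T_{2m-1,n}(q)=\sum_{r=0}^{m-1}(-1)^{n+r+1}\binom{2m-1}{r}\frac{(1-q^{m-r-\frac12})q^{(m-\frac12)n}}{(1-q)^{2m-1}(1+q^{m-r-\frac12})}+\sum_{r=0}^{m-1}(-1)^r\binom{2m-1}{r}\frac{(1-q^{(2n+1)(m-r-\frac12)})q^{rn}}{(1-q)^{2m-1}(1+q^{m-r-\frac12})}.$$
   Context: $q$ is an indeterminate and $q^{1/2}$ a fixed formal square root of $q$; identities are identities of rational functions in $q^{1/2}$. For integers $m,n\ge1$, $$T_{m,n}(q)=\sum_{k=1}^{n}(-1)^{n-k}\left(\frac{1-q^k}{1-q}\right)^{m}q^{\frac m2(n-k)}.$$ *)

theory Defs
  imports "HOL-Computational_Algebra.Polynomial" "HOL-Computational_Algebra.Fraction_Field"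
begin

text \<open>We work in the field of rational functions in the indeterminate \<open>s = q^(1/2)\<close>,
  i.e. the fraction field of \<open>\<rat>[s]\<close>.  Then \<open>q = s^2\<close> and \<open>q^(k/2) = s^k\<close>.\<close>

type_synonym ratfun = "rat poly fract"

definition qhalf :: ratfun where
  "qhalf = Fract [:0, 1:] 1"

definition qq :: ratfun where
  "qq = qhalf ^ 2"

text \<open>\<open>T m n\<close> as a rational function of \<open>q^(1/2)\<close>;
  the factor \<open>q^((m/2)(n-k))\<close> is \<open>(q^(1/2))^(m(n-k))\<close>.\<close>
definition T :: "nat \<Rightarrow> nat \<Rightarrow> ratfun" where
  "T m n = (\<Sum>k = 1..n. (-1) ^ (n - k) * ((1 - qq ^ k) / (1 - qq)) ^ m * qhalf ^ (m * (n - k)))"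

end

theory Submission
  imports Defs
begin

lemma telesc:
  fixes f :: "nat \<Rightarrow> 'a::comm_ring_1"
  shows "(\<Sum>k=1..n. (-1)^(n-k) * (f k + f (k-1))) = f n - (-1)^n * f 0"
proof (induction n)
  case 0 then show ?case by simp
next
  case (Suc n)
  have e1: "(\<Sum>k=1..Suc n. (-1)^(Suc n-k) * (f k + f (k-1)))
      = (\<Sum>k=1..n. (-1)^(Suc n-k) * (f k + f (k-1))) + (f (Suc n) + f n)"
    by simp
  have e2: "(\<Sum>k=1..n. (-1)^(Suc n-k) * (f k + f (k-1))) = - (\<Sum>k=1..n. (-1)^(n-k) * (f k + f (k-1)))"
    by (simp add: sum_negf[symmetric] Suc_diff_le)
  show ?case unfolding e1 e2 Suc.IH by (simp add: algebra_simps)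
qed

lemma binom_pair:
  fixes x :: "'a::comm_ring_1"
  shows "(1 - x)^(2*p+1) = (\<Sum>r=0..p. (-1)^r * of_nat ((2*p+1) choose r) * (x^r - x^(2*p+1-r)))"
proof -
  let ?M = "2*p+1"
  let ?g = "\<lambda>j. (-1)^j * of_nat (?M choose j) * x^j :: 'a"
  have "(1 - x)^?M = (-x + 1)^?M" by simp
  also have "\<dots> = (\<Sum>j=0..?M. ?g j)"
    unfolding binomial_ring by (simp add: atLeast0AtMost power_minus[of x] mult_ac)
  also have "\<dots> = (\<Sum>j=0..p. ?g j) + (\<Sum>j=Suc p..?M. ?g j)"
    using sum.ub_add_nat[of 0 p ?g "Suc p"] by (simp add: mult_2)
  also have "(\<Sum>j=Suc p..?M. ?g j) = (\<Sum>r=0..p. ?g (?M - r))"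
    by (rule sum.reindex_bij_witness[of _ "\<lambda>j. ?M - j" "\<lambda>j. ?M - j"]) auto
  also have "\<dots> = (\<Sum>r=0..p. uminus ((-1)^r * of_nat (?M choose r) * x^(?M - r)))"
  proof (rule sum.cong[OF refl])
    fix r assume r: "r \<in> {0..p}"
    have c: "?M choose (?M - r) = ?M choose r" using r by (intro binomial_symmetric[symmetric]) auto
    have e: "(-1::'a)^(?M - r) = - ((-1)^r)"
    proof -
      have "?M - r = r + 2*(p-r) + 1" using r by auto
      then show ?thesis by (simp add: power_add power_mult)
    qed
    show "?g (?M - r) = - ((-1)^r * of_nat (?M choose r) * x^(?M - r))" unfolding c e by simp
  qed
  finally show ?thesis by (simp add: sum_negf[symmetric] sum.distrib[symmetric] sum_subtractf[symmetric] algebra_simps)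
qed

lemma tel_r:
  fixes s :: "'a::field"
  assumes M: "M = 2*r+b"
  shows "(1+s^b) * (\<Sum>k=1..n. (-1)^(n-k) * ((((s^2)^k)^r - ((s^2)^k)^(M-r)) * s^(M*(n-k))))
    = (-1)^(n+1)*(1-s^b)*s^(M*n) + (1 - s^((2*n+1)*b)) * (s^2)^(r*n)"
proof -
  define f where "f k = s^(2*r*n + b*(n-k)) - s^(M*n+b*(k+1))" for k
  have "(1+s^b) * (\<Sum>k=1..n. (-1)^(n-k) * ((((s^2)^k)^r - ((s^2)^k)^(M-r)) * s^(M*(n-k))))
     = (\<Sum>k=1..n. (-1)^(n-k) * (f k + f (k-1)))"
    unfolding sum_distrib_left
  proof (rule sum.cong[OF refl])
    fix k assume k: "k \<in> {1..n}"
    then obtain d where d: "n = k + d" and k1: "k \<ge> 1" by (auto simp: le_iff_add)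
    obtain j where j: "k = Suc j" using k1 by (cases k) auto
    have e1: "((s^2)^k)^r * s^(M*(n-k)) = s^(2*r*n + b*(n-k))"
      unfolding d M by (simp add: power_mult[symmetric] power_add[symmetric] algebra_simps)
    have e2: "((s^2)^k)^(M-r) * s^(M*(n-k)) = s^(M*n+b*k)"
      unfolding d M by (simp add: power_mult[symmetric] power_add[symmetric] algebra_simps)
    have e3: "s^(2*r*n + b*(n-(k-1))) = s^(2*r*n + b*(n-k)) * s^b"
      unfolding d j by (simp add: power_add[symmetric] algebra_simps)
    have e4: "s^(M*n+b*(k-1+1)) = s^(M*n+b*k)"
      using k1 by simp
    have e5: "s^(M*n+b*(k+1)) = s^(M*n+b*k) * s^b"
      by (simp add: power_add[symmetric] algebra_simps)
    have "(1+s^b) * ((-1)^(n-k) * ((((s^2)^k)^r - ((s^2)^k)^(M-r)) * s^(M*(n-k))))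
       = (1+s^b) * ((-1)^(n-k) * (s^(2*r*n + b*(n-k)) - s^(M*n+b*k)))"
      by (simp only: left_diff_distrib e1 e2)
    also have "\<dots> = (-1)^(n-k) * (f k + f (k-1))"
      unfolding f_def e3 e4 e5 by (simp add: algebra_simps)
    finally show "(1+s^b) * ((-1)^(n-k) * ((((s^2)^k)^r - ((s^2)^k)^(M-r)) * s^(M*(n-k))))
       = (-1)^(n-k) * (f k + f (k-1))" .
  qed
  also have "\<dots> = f n - (-1)^n * f 0" by (rule telesc)
  also have "\<dots> = (-1)^(n+1)*(1-s^b)*s^(M*n) + (1 - s^((2*n+1)*b)) * (s^2)^(r*n)"
  proof -
    have a1: "s^(2*r*n + b*n) = s^(M*n)" unfolding M by (simp add: algebra_simps)
    have a2: "s^(M*n+b*(n+1)) = s^((2*n+1)*b) * (s^2)^(r*n)"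
      unfolding M by (simp add: power_mult[symmetric] power_add[symmetric] algebra_simps)
    have a3: "s^(2*r*n) = (s^2)^(r*n)" by (simp add: power_mult[symmetric] mult_ac)
    have a4: "s^(M*n+b*(0+1)) = s^b * s^(M*n)" by (simp add: power_add[symmetric] add.commute)
    have "f n - (-1)^n * f 0 = (s^(2*r*n) - s^(M*n+b*(n+1))) - (-1)^n * (s^(2*r*n + b*n) - s^(M*n+b*(0+1)))"
      unfolding f_def by simp
    also have "\<dots> = ((s^2)^(r*n) - s^((2*n+1)*b) * (s^2)^(r*n)) - (-1)^n * (s^(M*n) - s^b * s^(M*n))"
      unfolding a1 a2 a3 a4 ..
    also have "\<dots> = (-1)^(n+1)*(1-s^b)*s^(M*n) + (1 - s^((2*n+1)*b)) * (s^2)^(r*n)"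
      by (simp add: algebra_simps)
    finally show ?thesis .
  qed
  finally show ?thesis .
qed


lemma main_gen:
  fixes s :: "'a::field"
  assumes q: "1 - s^2 \<noteq> 0" and bnz: "\<And>r. 1 + s^(2*(p-r)+1) \<noteq> 0"
  shows "(\<Sum>k=1..n. (-1)^(n-k) * ((1-(s^2)^k)/(1-s^2))^(2*p+1) * s^((2*p+1)*(n-k))) =
   (\<Sum>r=0..p. (-1)^(n+r+1) * of_nat ((2*p+1) choose r) * ((1 - s^(2*(p-r)+1)) * s^((2*p+1)*n))
       / ((1-s^2)^(2*p+1) * (1+s^(2*(p-r)+1))))
 + (\<Sum>r=0..p. (-1)^r * of_nat ((2*p+1) choose r) * ((1 - s^((2*n+1)*(2*(p-r)+1))) * (s^2)^(r*n))
       / ((1-s^2)^(2*p+1) * (1+s^(2*(p-r)+1))))"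
proof -
  define M where "M = 2*p+1"
  define D where "D = (1-s^2)^M"
  define b where "b r = 2*(p-r)+1" for r
  define C where "C r = ((-1)^r * of_nat (M choose r) :: 'a)" for r
  define E where "E r = ((-1)^(n+1)*(1-s^b r)*s^(M*n) + (1 - s^((2*n+1)*b r)) * (s^2)^(r*n) :: 'a)" for r
  define S where "S r = ((\<Sum>k=1..n. (-1)^(n-k) * ((((s^2)^k)^r - ((s^2)^k)^(M-r)) * s^(M*(n-k)))) :: 'a)" for r
  have D0: "D \<noteq> 0" unfolding D_def using q by simp
  have B0: "1 + s^b r \<noteq> 0" for r unfolding b_def by (rule bnz)
  have SE: "S r = E r / (1 + s^b r)" if "r \<le> p" for r
  proof -
    have "M = 2*r + b r" unfolding M_def b_def using that by simp
    from tel_r[OF this, of s n] have "(1 + s^b r) * S r = E r" unfolding S_def E_def .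
    then show ?thesis using B0[of r] by (simp add: field_simps)
  qed
  have "(\<Sum>k=1..n. (-1)^(n-k) * ((1-(s^2)^k)/(1-s^2))^M * s^(M*(n-k)))
      = (\<Sum>k=1..n. (-1)^(n-k) * (1-(s^2)^k)^M * s^(M*(n-k))) / D"
    unfolding D_def sum_divide_distrib by (simp add: power_divide)
  also have "(\<Sum>k=1..n. (-1)^(n-k) * (1-(s^2)^k)^M * s^(M*(n-k)))
      = (\<Sum>k=1..n. \<Sum>r=0..p. C r * ((-1)^(n-k) * ((((s^2)^k)^r - ((s^2)^k)^(M-r)) * s^(M*(n-k)))))"
    unfolding M_def binom_pair C_def by (simp add: sum_distrib_left sum_distrib_right mult_ac)
  also have "\<dots> = (\<Sum>r=0..p. C r * S r)"
    unfolding S_def by (subst sum.swap) (simp add: sum_distrib_left)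
  also have "\<dots> = (\<Sum>r=0..p. C r * E r / (1 + s^b r))"
    by (rule sum.cong[OF refl]) (simp add: SE)
  finally have L: "(\<Sum>k=1..n. (-1)^(n-k) * ((1-(s^2)^k)/(1-s^2))^M * s^(M*(n-k)))
      = (\<Sum>r=0..p. C r * E r / (D * (1 + s^b r)))"
    by (simp add: sum_divide_distrib mult_ac)
  show ?thesis
    unfolding M_def[symmetric] D_def[symmetric] b_def[symmetric] L sum.distrib[symmetric]
  proof (rule sum.cong[OF refl])
    fix r
    show "C r * E r / (D * (1 + s ^ b r)) =
         (-1)^(n+r+1) * of_nat (M choose r) * ((1 - s^b r) * s^(M*n)) / (D * (1 + s^b r)) +
         (-1)^r * of_nat (M choose r) * ((1 - s^((2*n+1)*b r)) * (s^2)^(r*n)) / (D * (1 + s^b r))"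
      unfolding C_def E_def by (simp add: add_divide_distrib[symmetric] power_add algebra_simps)
  qed
qed


lemma qhalf_pow: "qhalf ^ k = Fract ([:0,1:] ^ k) 1"
  by (induction k) (simp_all add: qhalf_def One_fract_def)

lemma Fract1_nz: "p \<noteq> 0 \<Longrightarrow> Fract p 1 \<noteq> (0::ratfun)"
  by (simp add: Zero_fract_def eq_fract)

lemma qq_nz: "1 - qhalf^2 \<noteq> 0"
proof -
  have "1 - qhalf^2 = Fract (1 - [:0,1:]^2) 1" by (simp add: qhalf_pow One_fract_def)
  moreover have "(1 - [:0,1:]^2 :: rat poly) \<noteq> 0"
  proof
    assume "(1 - [:0,1:]^2 :: rat poly) = 0"
    then have "poly (1 - [:0,1:]^2 :: rat poly) 2 = 0" by simp
    then show False by simp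
  qed
  ultimately show ?thesis using Fract1_nz by simp
qed

lemma b_nz: "1 + qhalf^k \<noteq> 0"
proof -
  have "1 + qhalf^k = Fract (1 + [:0,1:]^k) 1" by (simp add: qhalf_pow One_fract_def)
  moreover have "(1 + [:0,1:]^k :: rat poly) \<noteq> 0"
  proof
    assume "(1 + [:0,1:]^k :: rat poly) = 0"
    then have "poly (1 + [:0,1:]^k :: rat poly) 1 = 0" by simp
    then show False by simp
  qed
  ultimately show ?thesis using Fract1_nz by simp
qed

theorem lemma2p3:
  fixes m n :: nat
  assumes "m \<ge> 1" and "n \<ge> 1"
  shows "T (2 * m - 1) n =
    (\<Sum>r = 0..m - 1. (-1) ^ (n + r + 1) * of_nat ((2 * m - 1) choose r) *
        ((1 - qhalf ^ (2 * (m - r) - 1)) * qhalf ^ ((2 * m - 1) * n))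
        / ((1 - qq) ^ (2 * m - 1) * (1 + qhalf ^ (2 * (m - r) - 1))))
  + (\<Sum>r = 0..m - 1. (-1) ^ r * of_nat ((2 * m - 1) choose r) *
        ((1 - qhalf ^ ((2 * n + 1) * (2 * (m - r) - 1))) * qq ^ (r * n))
        / ((1 - qq) ^ (2 * m - 1) * (1 + qhalf ^ (2 * (m - r) - 1))))"
proof -
  obtain p where m: "m = Suc p" using assms(1) by (cases m) auto
  have M: "2 * m - 1 = 2*p+1" "m - 1 = p" using m by auto
  have br: "2 * (m - r) - 1 = 2*(p-r)+1" if "r \<in> {0..p}" for r using that m by auto
  have "T (2 * m - 1) n = (\<Sum>k=1..n. (-1)^(n-k) * ((1-(qhalf^2)^k)/(1-qhalf^2))^(2*p+1) * qhalf^((2*p+1)*(n-k)))"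
    unfolding T_def qq_def M ..
  also note main_gen[OF qq_nz b_nz]
  also have "(\<Sum>r=0..p. (-1)^(n+r+1) * of_nat ((2*p+1) choose r) * ((1 - qhalf^(2*(p-r)+1)) * qhalf^((2*p+1)*n))
       / ((1-qhalf^2)^(2*p+1) * (1+qhalf^(2*(p-r)+1))))
    = (\<Sum>r = 0..m - 1. (-1) ^ (n + r + 1) * of_nat ((2 * m - 1) choose r) *
        ((1 - qhalf ^ (2 * (m - r) - 1)) * qhalf ^ ((2 * m - 1) * n))
        / ((1 - qq) ^ (2 * m - 1) * (1 + qhalf ^ (2 * (m - r) - 1))))"
    unfolding M qq_def by (intro sum.cong refl) (simp only: br)
  also have "(\<Sum>r=0..p. (-1)^r * of_nat ((2*p+1) choose r) * ((1 - qhalf^((2*n+1)*(2*(p-r)+1))) * (qhalf^2)^(r*n))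
       / ((1-qhalf^2)^(2*p+1) * (1+qhalf^(2*(p-r)+1))))
    = (\<Sum>r = 0..m - 1. (-1) ^ r * of_nat ((2 * m - 1) choose r) *
        ((1 - qhalf ^ ((2 * n + 1) * (2 * (m - r) - 1))) * qq ^ (r * n))
        / ((1 - qq) ^ (2 * m - 1) * (1 + qhalf ^ (2 * (m - r) - 1))))"
    unfolding M qq_def by (intro sum.cong refl) (simp only: br)
  finally show ?thesis .
qed

end
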